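(* Let $L$ be a distributive lattice with $|L|>1$. Then $L^*\setminus\{0\}$ is path connected, where $L^*\subseteq\mathbb R^L$ carries the product topology and $0$ denotes the constant zero homomorphism.
   Context: $L^*$ is the set of all lattice homomorphisms $x^*:L\to[-1,1]$, i.e. maps with $x^*(a\vee b)=\max\{x^*(a),x^*(b)\}$ and $x^*(a\wedge b)=\min\{x^*(a),x^*(b)\}$ for all $a,b\in L$; it is regarded as a subset of $\mathbb R^L$. *)

theory Defs
  imports "HOL-Analysis.Analysis"
begin

text \<open>The set L* of lattice homomorphisms from L into [-1,1] (with max/min),
  regarded as a subset of the function space L \<Rightarrow> real, which carries the
  product topology (HOL-Analysis, Function_Topology).\<close>
definition lattice_hom_dual :: "('a::lattice \<Rightarrow> real) set" where
  "lattice_hom_dual = {x. (\<forall>a. x a \<in> {-1..1}) \<and>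
      (\<forall>a b. x (sup a b) = max (x a) (x b)) \<and>
      (\<forall>a b. x (inf a b) = min (x a) (x b))}"

end

theory Submission
  imports Defs
begin

definition filt :: "'a::distrib_lattice set \<Rightarrow> bool" where
  "filt F \<longleftrightarrow> (\<forall>x\<in>F. \<forall>y. x \<le> y \<longrightarrow> y \<in> F) \<and> (\<forall>x\<in>F. \<forall>y\<in>F. inf x y \<in> F)"

lemma prime_filter_exists:
  fixes a b :: "'a::distrib_lattice"
  assumes "\<not> a \<le> b"
  shows "\<exists>M. filt M \<and> a \<in> M \<and> b \<notin> M \<and> (\<forall>x y. sup x y \<in> M \<longrightarrow> x \<in> M \<or> y \<in> M)"
proof -
  define A where "A = {F. filt F \<and> a \<in> F \<and> b \<notin> F}"
  have "\<exists>M\<in>A. \<forall>X\<in>A. M \<subseteq> X \<longrightarrow> X = M"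
  proof (rule Zorn_Lemma2, intro ballI)
    fix C assume C: "C \<in> chains A"
    show "\<exists>U\<in>A. \<forall>X\<in>C. X \<subseteq> U"
    proof (cases "C = {}")
      case True
      have "{x. a \<le> x} \<in> A" using assms unfolding A_def filt_def by auto
      then show ?thesis using True by blast
    next
      case False
      have sub: "C \<subseteq> A" and ch: "\<forall>X\<in>C. \<forall>Y\<in>C. X \<subseteq> Y \<or> Y \<subseteq> X"
        using C unfolding chains_def chain_subset_def by auto
      have "\<Union>C \<in> A"
        unfolding A_def filt_def
      proof (intro CollectI conjI ballI allI impI)
        fix x y assume "x \<in> \<Union>C" "x \<le> y"
        then show "y \<in> \<Union>C" using sub unfolding A_def filt_def by blast
      next
        fix x y assume "x \<in> \<Union>C" "y \<in> \<Union>C"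
        then obtain X Y where "X \<in> C" "Y \<in> C" "x \<in> X" "y \<in> Y" by auto
        moreover have "filt X" "filt Y" using sub \<open>X \<in> C\<close> \<open>Y \<in> C\<close> unfolding A_def by auto
        moreover have "X \<subseteq> Y \<or> Y \<subseteq> X" using ch \<open>X \<in> C\<close> \<open>Y \<in> C\<close> by blast
        ultimately show "inf x y \<in> \<Union>C"
        proof (elim conjE disjE)
          assume "filt Y" "X \<subseteq> Y"
          then have "inf x y \<in> Y" using \<open>x \<in> X\<close> \<open>y \<in> Y\<close> unfolding filt_def by blast
          then show ?thesis using \<open>Y \<in> C\<close> by blast
        next
          assume "filt X" "Y \<subseteq> X"
          then have "inf x y \<in> X" using \<open>x \<in> X\<close> \<open>y \<in> Y\<close> unfolding filt_def by blast
          then show ?thesis using \<open>X \<in> C\<close> by blast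
        qed
      next
        show "a \<in> \<Union>C" using False sub unfolding A_def by auto
      next
        show "b \<notin> \<Union>C" using sub unfolding A_def by auto
      qed
      then show ?thesis by blast
    qed
  qed
  then obtain M where MA: "M \<in> A" and max: "\<And>X. X \<in> A \<Longrightarrow> M \<subseteq> X \<Longrightarrow> X = M" by blast
  have up: "\<And>x y. x \<in> M \<Longrightarrow> x \<le> y \<Longrightarrow> y \<in> M" and infc: "\<And>x y. x \<in> M \<Longrightarrow> y \<in> M \<Longrightarrow> inf x y \<in> M"
    and aM: "a \<in> M" and bM: "b \<notin> M" using MA unfolding A_def filt_def by auto
  have key: "\<exists>f\<in>M. inf f x \<le> b" if xM: "x \<notin> M" for x
  proof (rule ccontr)
    assume nb: "\<not> (\<exists>f\<in>M. inf f x \<le> b)"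
    define M' where "M' = {z. \<exists>f\<in>M. inf f x \<le> z}"
    have "M' \<in> A" unfolding A_def filt_def
    proof (intro CollectI conjI ballI allI impI)
      fix u v assume "u \<in> M'" "u \<le> v" then show "v \<in> M'" unfolding M'_def using order_trans by blast
    next
      fix u v assume "u \<in> M'" "v \<in> M'"
      then obtain f g where "f \<in> M" "g \<in> M" "inf f x \<le> u" "inf g x \<le> v" unfolding M'_def by auto
      have "inf (inf f g) x \<le> inf f x" by (simp add: inf.coboundedI1)
      moreover have "inf (inf f g) x \<le> inf g x" by (simp add: inf.coboundedI1 inf.coboundedI2)
      ultimately have "inf (inf f g) x \<le> inf u v" using \<open>inf f x \<le> u\<close> \<open>inf g x \<le> v\<close>
        by (meson le_inf_iff order_trans)
      then show "inf u v \<in> M'" unfolding M'_def using infc \<open>f \<in> M\<close> \<open>g \<in> M\<close> by blast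
    next
      show "a \<in> M'" unfolding M'_def using aM inf_le1 by blast
    next
      show "b \<notin> M'" unfolding M'_def using nb by blast
    qed
    moreover have "M \<subseteq> M'" unfolding M'_def using inf_le1 by blast
    moreover have "x \<in> M'" unfolding M'_def using aM inf_le2 by blast
    ultimately show False using max xM by blast
  qed
  have "sup x y \<in> M \<longrightarrow> x \<in> M \<or> y \<in> M" for x y
  proof (intro impI, rule ccontr)
    assume s: "sup x y \<in> M" and n: "\<not> (x \<in> M \<or> y \<in> M)"
    then obtain f g where f: "f \<in> M" "inf f x \<le> b" and g: "g \<in> M" "inf g y \<le> b"
      using key by blast
    have "inf (inf f g) (sup x y) = sup (inf (inf f g) x) (inf (inf f g) y)"
      by (simp add: inf_sup_distrib1)
    also have "\<dots> \<le> b"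
    proof (rule le_supI)
      have "inf (inf f g) x \<le> inf f x" by (simp add: inf.coboundedI1)
      then show "inf (inf f g) x \<le> b" using f(2) by (rule order_trans)
      have "inf (inf f g) y \<le> inf g y" by (simp add: inf.coboundedI1 inf.coboundedI2)
      then show "inf (inf f g) y \<le> b" using g(2) by (rule order_trans)
    qed
    finally have "inf (inf f g) (sup x y) \<le> b" .
    moreover have "inf (inf f g) (sup x y) \<in> M" using infc f g s by blast
    ultimately show False using up bM by blast
  qed
  then show ?thesis using MA unfolding A_def by blast
qed


lemma mono_max_real: "mono (f::real \<Rightarrow> real) \<Longrightarrow> f (max u v) = max (f u) (f v)"
  by (metis max.absorb1 max.absorb2 monoD nle_le)

lemma mono_min_real: "mono (f::real \<Rightarrow> real) \<Longrightarrow> f (min u v) = min (f u) (f v)"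
  by (metis min.absorb1 min.absorb2 monoD nle_le)

lemma mono_hom:
  fixes x :: "'a::distrib_lattice \<Rightarrow> real"
  assumes "x \<in> lattice_hom_dual" "mono f" "\<And>s. s \<in> {-1..1} \<Longrightarrow> f s \<in> {-1..1}"
  shows "(\<lambda>z. f (x z)) \<in> lattice_hom_dual"
  using assms unfolding lattice_hom_dual_def
  by (auto simp: mono_max_real[OF assms(2)] mono_min_real[OF assms(2)])

lemma hom_path:
  fixes x :: "'a::distrib_lattice \<Rightarrow> real" and F :: "real \<Rightarrow> real \<Rightarrow> real"
  assumes x: "x \<in> lattice_hom_dual"
    and m: "\<And>t. t \<in> {0..1} \<Longrightarrow> mono (F t)"
    and r: "\<And>t s. t \<in> {0..1} \<Longrightarrow> s \<in> {-1..1} \<Longrightarrow> F t s \<in> {-1..1}"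
    and c: "\<And>s. continuous_on {0..1} (\<lambda>t. F t s)"
    and nz: "\<And>t. t \<in> {0..1} \<Longrightarrow> \<exists>z. F t (x z) \<noteq> 0"
    and p: "(\<lambda>z. F 0 (x z)) = p" and q: "(\<lambda>z. F 1 (x z)) = q"
  shows "path_component (lattice_hom_dual - {(\<lambda>_::'a. 0::real)}) p q"
  unfolding path_component_def
proof (intro exI conjI)
  let ?g = "\<lambda>t z. F t (x z)"
  show "path ?g" unfolding path_def
    by (rule continuous_on_coordinatewise_then_product) (rule c)
  show "path_image ?g \<subseteq> lattice_hom_dual - {(\<lambda>_::'a. 0::real)}"
  proof
    fix y assume "y \<in> path_image ?g"
    then obtain t where t: "t \<in> {0..1}" and y: "y = ?g t" unfolding path_image_def by auto
    have "y \<in> lattice_hom_dual" unfolding y by (rule mono_hom[OF x m[OF t] r[OF t]])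
    moreover have "y \<noteq> (\<lambda>_. 0)" using nz[OF t] unfolding y by (metis)
    ultimately show "y \<in> lattice_hom_dual - {(\<lambda>_::'a. 0::real)}" by blast
  qed
  show "pathstart ?g = p" using p unfolding pathstart_def by simp
  show "pathfinish ?g = q" using q unfolding pathfinish_def by simp
qed

lemma hom_range: "x \<in> lattice_hom_dual \<Longrightarrow> x z \<in> {-1..1}"
  unfolding lattice_hom_dual_def by auto

lemma to_const:
  fixes x :: "'a::distrib_lattice \<Rightarrow> real"
  assumes x: "x \<in> lattice_hom_dual" and c: "x c > 0"
  shows "path_component (lattice_hom_dual - {(\<lambda>_::'a. 0::real)}) x (\<lambda>_. 1)"
proof (rule hom_path[OF x, where F = "\<lambda>t s. max s (2*t - 1)"])
  show "mono (\<lambda>s. max s (2*t - 1))" for t :: real by (auto simp: mono_def)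
  show "continuous_on {0..1} (\<lambda>t::real. max s (2*t - 1))" for s :: real by (intro continuous_intros)
  show "\<exists>z. max (x z) (2*t - 1) \<noteq> 0" for t using c by (metis max.cobounded1 not_le order.strict_trans2 less_irrefl)
  show "max s (2*t - 1) \<in> {-1..1}" if "t \<in> {0..1}" "s \<in> {-1..1}" for t s :: real using that by auto
  show "(\<lambda>z. max (x z) (2*0 - 1)) = x"
  proof (rule ext)
    fix z show "max (x z) (2*0 - 1) = x z" using hom_range[OF x, of z] by auto
  qed
  show "(\<lambda>z. max (x z) (2*1 - 1)) = (\<lambda>_. 1)"
  proof (rule ext)
    fix z show "max (x z) (2*1 - 1) = 1" using hom_range[OF x, of z] by auto
  qed
qed

lemma to_mconst:
  fixes x :: "'a::distrib_lattice \<Rightarrow> real"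
  assumes x: "x \<in> lattice_hom_dual" and c: "x c < 0"
  shows "path_component (lattice_hom_dual - {(\<lambda>_::'a. 0::real)}) x (\<lambda>_. -1)"
proof (rule hom_path[OF x, where F = "\<lambda>t s. min s (1 - 2*t)"])
  show "mono (\<lambda>s. min s (1 - 2*t))" for t :: real by (auto simp: mono_def)
  show "continuous_on {0..1} (\<lambda>t::real. min s (1 - 2*t))" for s :: real by (intro continuous_intros)
  show "\<exists>z. min (x z) (1 - 2*t) \<noteq> 0" for t using c by (metis min.cobounded1 not_le order.strict_trans1 less_irrefl)
  show "min s (1 - 2*t) \<in> {-1..1}" if "t \<in> {0..1}" "s \<in> {-1..1}" for t s :: real using that by auto
  show "(\<lambda>z. min (x z) (1 - 2*0)) = x"
  proof (rule ext)
    fix z show "min (x z) (1 - 2*0) = x z" using hom_range[OF x, of z] by auto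
  qed
  show "(\<lambda>z. min (x z) (1 - 2*1)) = (\<lambda>_. -1)"
  proof (rule ext)
    fix z show "min (x z) (1 - 2*1) = -1" using hom_range[OF x, of z] by auto
  qed
qed

lemma one_to_mone:
  fixes a b :: "'a::distrib_lattice"
  assumes "\<not> a \<le> b"
  shows "path_component (lattice_hom_dual - {(\<lambda>_::'a. 0::real)}) (\<lambda>_. 1) (\<lambda>_. -1)"
proof -
  obtain M where M: "filt M" "a \<in> M" "b \<notin> M" and pr: "\<And>x y. sup x y \<in> M \<Longrightarrow> x \<in> M \<or> y \<in> M"
    using prime_filter_exists[OF assms] by blast
  have up: "\<And>x y. x \<in> M \<Longrightarrow> x \<le> y \<Longrightarrow> y \<in> M" and infc: "\<And>x y. x \<in> M \<Longrightarrow> y \<in> M \<Longrightarrow> inf x y \<in> M"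
    using M(1) unfolding filt_def by auto
  define h :: "'a \<Rightarrow> real" where "h z = (if z \<in> M then 1 else 0)" for z
  have supM: "sup x y \<in> M \<longleftrightarrow> x \<in> M \<or> y \<in> M" for x y
    using pr up by (meson sup_ge1 sup_ge2)
  have infM: "inf x y \<in> M \<longleftrightarrow> x \<in> M \<and> y \<in> M" for x y
    using infc up by (meson inf_le1 inf_le2)
  have h: "h \<in> lattice_hom_dual" unfolding lattice_hom_dual_def h_def
    by (auto simp: supM infM)
  have ha: "h a = 1" and hb: "h b = 0" using M unfolding h_def by auto
  have hr: "h z \<in> {0..1}" for z unfolding h_def by auto
  define y where "y z = max (h z - 1) (-1)" for z
  have y: "y \<in> lattice_hom_dual" unfolding y_def
    by (rule mono_hom[OF h]) (auto simp: mono_def)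
  have yb: "y b = -1" unfolding y_def hb by simp
  have yr: "y z \<in> {-1..0}" for z using hr[of z] unfolding y_def by auto
  have 1: "path_component (lattice_hom_dual - {(\<lambda>_::'a. 0::real)}) (\<lambda>_. 1) h"
  proof (rule hom_path[OF h, where F = "\<lambda>t s. max s (1 - t)"])
    show "mono (\<lambda>s. max s (1 - t))" for t :: real by (auto simp: mono_def)
    show "continuous_on {0..1} (\<lambda>t::real. max s (1 - t))" for s :: real by (intro continuous_intros)
    show "\<exists>z. max (h z) (1 - t) \<noteq> 0" for t using ha by (intro exI[of _ a]) auto
    show "max s (1 - t) \<in> {-1..1}" if "t \<in> {0..1}" "s \<in> {-1..1}" for t s :: real using that by auto
    show "(\<lambda>z. max (h z) (1 - 0)) = (\<lambda>_. 1)"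
    proof (rule ext)
      fix z show "max (h z) (1 - 0) = 1" using hr[of z] by auto
    qed
    show "(\<lambda>z. max (h z) (1 - 1)) = h"
    proof (rule ext)
      fix z show "max (h z) (1 - 1) = h z" using hr[of z] by auto
    qed
  qed
  have 2: "path_component (lattice_hom_dual - {(\<lambda>_::'a. 0::real)}) h y"
  proof (rule hom_path[OF h, where F = "\<lambda>t s. max (s - t) (-1)"])
    show "mono (\<lambda>s. max (s - t) (-1))" for t :: real by (auto simp: mono_def)
    show "continuous_on {0..1} (\<lambda>t::real. max (s - t) (-1))" for s :: real by (intro continuous_intros)
    show "\<exists>z. max (h z - t) (-1) \<noteq> 0" if "t \<in> {0..1}" for t
    proof (cases "t = 0")
      case True then show ?thesis using ha by (intro exI[of _ a]) auto
    next
      case False then show ?thesis using hb that by (intro exI[of _ b]) auto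
    qed
    show "max (s - t) (-1) \<in> {-1..1}" if "t \<in> {0..1}" "s \<in> {-1..1}" for t s :: real using that by auto
    show "(\<lambda>z. max (h z - 0) (-1)) = h"
    proof (rule ext)
      fix z show "max (h z - 0) (-1) = h z" using hr[of z] by auto
    qed
    show "(\<lambda>z. max (h z - 1) (-1)) = y" unfolding y_def by simp
  qed
  have 3: "path_component (lattice_hom_dual - {(\<lambda>_::'a. 0::real)}) y (\<lambda>_. -1)"
    using to_mconst[OF y, of b] yb by simp
  show ?thesis using path_component_trans[OF path_component_trans[OF 1 2] 3] .
qed

theorem mainTheorem10:
  assumes "\<exists>a b :: 'a::distrib_lattice. a \<noteq> b"
  shows "path_connected (lattice_hom_dual - {(\<lambda>_::'a. 0::real)})"
proof -
  let ?S = "lattice_hom_dual - {(\<lambda>_::'a. 0::real)}"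
  obtain a b :: 'a where "\<not> a \<le> b" using assms by (metis order.antisym)
  then have pm: "path_component ?S (\<lambda>_. 1) (\<lambda>_. -1)" by (rule one_to_mone)
  have one: "path_component ?S x (\<lambda>_. 1)" if "x \<in> ?S" for x
  proof -
    have x: "x \<in> lattice_hom_dual" and "x \<noteq> (\<lambda>_. 0)" using that by auto
    then obtain c where "x c \<noteq> 0" by auto
    then consider "x c > 0" | "x c < 0" by linarith
    then show ?thesis
    proof cases
      case 1 then show ?thesis by (rule to_const[OF x])
    next
      case 2 show ?thesis
        by (rule path_component_trans[OF to_mconst[OF x 2] path_component_sym[OF pm]])
    qed
  qed
  show ?thesis unfolding path_connected_component
    using one path_component_trans path_component_sym by blast
qed

end
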